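(* Let $k\ge 2$ and let $L$ be a subspace of $\bigwedge^{k}V$ such that $e_{1}\wedge e_{2}\wedge\bigwedge^{k-2}V\subseteq L$ and $e_1\wedge e_2\wedge x=0$ for all $x\in L$. If $N_{j\to i}L=L$ for all $i<j$ with $i,j\geq3$, then $L$ has a basis $B$ such that for every $b\in B$ and every $j\geq3$, either $b\in\bigwedge^kV^{(j)}$ or $b\in e_j\wedge\bigwedge^{k-1}V^{(j)}$ (i.e. the basis is monomial with respect to every $e_j$ with $j\ge3$).
   Context: $\mathbb{F}$ is a field (assumed throughout the paper, for expository purposes, to have characteristic not $2$), $V$ is an $n$-dimensional $\mathbb{F}$-vector space with a fixed basis $e_1,\dots,e_n$, and $\bigwedge V$ its exterior algebra. For $j\in[n]$, $V^{(j)}$ is the span of $\{e_h:h\neq j\}$, and $\bigwedge V^{(j)}$ is viewed as a subalgebra of $\bigwedge V$. Slow shift: for distinct $i,j\in[n]$ and nonzero $m\in\bigwedge^kV$, write uniquely $m=x+e_j\wedge y$ with $x\in\bigwedge^kV^{(j)}$, $y\in\bigwedge^{k-1}V^{(j)}$, and set $N_{j\to i}m=x+e_i\wedge y$ if this is nonzero, and $N_{j\to i}m=e_j\wedge y$ otherwise (the limit as $t\to0$ of the projective action of the linear map $e_j\mapsto e_i+te_j$ fixing the other $e_h$). For a subspace $L$ of $\bigwedge^kV$, $N_{j\to i}L$ is the span of $\{N_{j\to i}m:m\in L\setminus\{0\}\}$. *)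

theory Defs
  imports Complex_Main "HOL-Library.Function_Algebras"
begin

text \<open>Coordinate model of the exterior algebra of V = F^n with basis e_1..e_n.
  An element of the exterior algebra is a function assigning to each finite index
  set S the coefficient of e_S = e_{s_1} wedge ... wedge e_{s_k} (s_1 < ... < s_k).\<close>

type_synonym 'a ext = "nat set \<Rightarrow> 'a"

definition fscale :: "'a::field \<Rightarrow> 'a ext \<Rightarrow> 'a ext" where
  "fscale c x = (\<lambda>S. c * x S)"

lemma vector_space_fscale: "vector_space (fscale :: 'a::field \<Rightarrow> 'a ext \<Rightarrow> 'a ext)"
  unfolding vector_space_def fscale_def by (auto simp: algebra_simps fun_eq_iff)

text \<open>Sign of e_S wedge e_T = sgn S T * e_(S union T) for disjoint S, T.\<close>
definition ext_sign :: "nat set \<Rightarrow> nat set \<Rightarrow> 'a::field" where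
  "ext_sign S T = (- 1) ^ card {(s, t). s \<in> S \<and> t \<in> T \<and> t < s}"

definition wedge :: "'a::field ext \<Rightarrow> 'a ext \<Rightarrow> 'a ext" where
  "wedge x y = (\<lambda>U. \<Sum>S\<in>Pow U. ext_sign S (U - S) * x S * y (U - S))"

definition evec :: "nat \<Rightarrow> 'a::field ext" where
  "evec j = (\<lambda>S. if S = {j} then 1 else 0)"

definition ext_pow :: "nat set \<Rightarrow> nat \<Rightarrow> 'a::field ext set" where
  "ext_pow A k = {x. \<forall>S. x S \<noteq> 0 \<longrightarrow> S \<subseteq> A \<and> card S = k}"

abbreviation Vj :: "nat \<Rightarrow> nat \<Rightarrow> nat set" where
  "Vj n j \<equiv> {1..n} - {j}"

definition slow_shift :: "nat \<Rightarrow> nat \<Rightarrow> nat \<Rightarrow> nat \<Rightarrow> 'a::field ext \<Rightarrow> 'a ext" where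
  "slow_shift n k j i m =
     (let (x, y) = (THE (x, y). x \<in> ext_pow (Vj n j) k \<and> y \<in> ext_pow (Vj n j) (k - 1)
                                 \<and> m = x + wedge (evec j) y)
      in if x + wedge (evec i) y \<noteq> 0 then x + wedge (evec i) y else wedge (evec j) y)"

definition slow_shift_space :: "nat \<Rightarrow> nat \<Rightarrow> nat \<Rightarrow> nat \<Rightarrow> 'a::field ext set \<Rightarrow> 'a ext set" where
  "slow_shift_space n k j i L = module.span fscale (slow_shift n k j i ` (L - {0}))"

end

theory Submission
  imports Defs
begin

definition mono1 :: "nat set \<Rightarrow> 'a::field ext" where
  "mono1 A = (\<lambda>S. if S = A then 1 else 0)"

definition rst :: "(nat set \<Rightarrow> bool) \<Rightarrow> 'a::field ext \<Rightarrow> 'a ext" where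
  "rst P m = (\<lambda>S. if P S then m S else 0)"

definition hom :: "nat \<Rightarrow> 'a::field ext \<Rightarrow> bool" where
  "hom j b \<longleftrightarrow> (\<forall>S. b S \<noteq> 0 \<longrightarrow> j \<notin> S) \<or> (\<forall>S. b S \<noteq> 0 \<longrightarrow> j \<in> S)"

lemma ext_sign_sq: "ext_sign A B * ext_sign A B = (1::'a::field)"
  unfolding ext_sign_def by (simp add: power_mult_distrib[symmetric])

lemma ext_sign_nz: "ext_sign A B \<noteq> (0::'a::field)"
  unfolding ext_sign_def by simp

lemma wedge_mono1:
  "wedge (mono1 A) y U = (if finite U \<and> A \<subseteq> U then ext_sign A (U - A) * y (U - A) else (0::'a::field))"
proof (cases "finite U")
  case True
  have "wedge (mono1 A) y U = (\<Sum>S\<in>Pow U. if S = A then ext_sign S (U - S) * y (U - S) else 0)"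
    unfolding wedge_def mono1_def by (intro sum.cong) auto
  also have "\<dots> = (if A \<in> Pow U then ext_sign A (U - A) * y (U - A) else 0)"
    using True by (intro sum.delta) simp
  finally show ?thesis using True by auto
next
  case False
  then show ?thesis unfolding wedge_def by simp
qed

lemma evec_mono1: "evec j = mono1 {j}"
  unfolding evec_def mono1_def by simp

lemma e12: "wedge (evec 1) (evec 2) = (mono1 {1,2} :: 'a::field ext)"
proof
  fix U
  have s: "ext_sign {1::nat} {2} = (1::'a)"
  proof -
    have "{(s, t). s \<in> {1::nat} \<and> t \<in> {2::nat} \<and> t < s} = {}" by auto
    then show ?thesis unfolding ext_sign_def by (metis card.empty power_0)
  qed
  show "wedge (evec 1) (evec 2) U = (mono1 {1,2} :: 'a ext) U"
    unfolding evec_mono1 wedge_mono1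
    apply (simp add: mono1_def)
    using s by (auto simp: insert_Diff_if)
qed

lemma factor_lemma:
  fixes b :: "'a::field ext"
  assumes A: "A \<subseteq> B" and B: "finite B" and b: "b \<in> ext_pow B k"
    and sup: "\<forall>S. b S \<noteq> 0 \<longrightarrow> A \<subseteq> S"
  shows "\<exists>y. y \<in> ext_pow (B - A) (k - card A) \<and> b = wedge (mono1 A) y"
proof -
  define y where "y = (\<lambda>T. if T \<inter> A = {} then ext_sign A T * b (T \<union> A) else 0)"
  have "y \<in> ext_pow (B - A) (k - card A)"
    unfolding ext_pow_def
  proof (intro CollectI allI impI)
    fix T assume "y T \<noteq> 0"
    then have d: "T \<inter> A = {}" and nz: "b (T \<union> A) \<noteq> 0" unfolding y_def by (auto split: if_splits)
    from nz b have s: "T \<union> A \<subseteq> B" "card (T \<union> A) = k" unfolding ext_pow_def by auto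
    have "finite T" "finite A" using s B A finite_subset by auto
    then have "card (T \<union> A) = card T + card A" using d card_Un_disjoint by blast
    then show "T \<subseteq> B - A \<and> card T = k - card A" using s d by auto
  qed
  moreover have "b = wedge (mono1 A) y"
  proof
    fix U
    show "b U = wedge (mono1 A) y U"
    proof (cases "finite U \<and> A \<subseteq> U")
      case True
      then have "U - A \<union> A = U" "(U - A) \<inter> A = {}" by auto
      then show ?thesis using True unfolding wedge_mono1 y_def
        by (simp add: mult.assoc[symmetric] ext_sign_sq)
    next
      case False
      have "b U = 0"
      proof (rule ccontr)
        assume "b U \<noteq> 0"
        with b sup have "U \<subseteq> B" "A \<subseteq> U" unfolding ext_pow_def by auto
        with False B show False using finite_subset by blast
      qed
      moreover have "wedge (mono1 A) y U = 0" using False wedge_mono1 by metis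
      ultimately show ?thesis by simp
    qed
  qed
  ultimately show ?thesis by blast
qed

lemma wedge_evec_zero: "j \<notin> U \<Longrightarrow> wedge (evec j) y U = 0"
  unfolding evec_mono1 wedge_mono1 by auto

lemma wedge_evec_ins: "finite T \<Longrightarrow> j \<notin> T \<Longrightarrow> wedge (evec j) y (insert j T) = ext_sign {j} T * y T"
  unfolding evec_mono1 wedge_mono1 by auto

lemma ext_pow_fin: "x \<in> ext_pow (Vj n j) k \<Longrightarrow> x T \<noteq> 0 \<Longrightarrow> finite T \<and> j \<notin> T \<and> T \<subseteq> {1..n}"
  unfolding ext_pow_def using finite_subset by blast

lemma sol_form:
  fixes m :: "'a::field ext"
  assumes x: "x \<in> ext_pow (Vj n j) k" and y: "y \<in> ext_pow (Vj n j) (k - 1)"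
    and m: "m = x + wedge (evec j) y"
  shows "x = rst (\<lambda>S. j \<notin> S) m \<and> y = (\<lambda>T. if j \<notin> T \<and> finite T then ext_sign {j} T * m (insert j T) else 0)"
proof
  have xj: "x U = 0" if "j \<in> U" for U using ext_pow_fin[OF x, of U] that by blast
  show "x = rst (\<lambda>S. j \<notin> S) m"
  proof
    fix U show "x U = rst (\<lambda>S. j \<notin> S) m U"
      unfolding rst_def m using xj wedge_evec_zero[of j U y] by auto
  qed
  show "y = (\<lambda>T. if j \<notin> T \<and> finite T then ext_sign {j} T * m (insert j T) else 0)"
  proof
    fix T
    show "y T = (if j \<notin> T \<and> finite T then ext_sign {j} T * m (insert j T) else 0)"
    proof (cases "j \<notin> T \<and> finite T")
      case True
      have "m (insert j T) = ext_sign {j} T * y T"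
        unfolding m using xj[of "insert j T"] wedge_evec_ins[of T j y] True by simp
      then show ?thesis using True by (simp add: mult.assoc[symmetric] ext_sign_sq)
    next
      case False
      then show ?thesis using ext_pow_fin[OF y, of T] by auto
    qed
  qed
qed

lemma rst_ext_pow: "m \<in> ext_pow B k \<Longrightarrow> rst P m \<in> ext_pow B k"
  unfolding ext_pow_def rst_def by auto

lemma decomp_ex:
  fixes m :: "'a::field ext"
  assumes j: "j \<in> {1..n}" and m: "m \<in> ext_pow {1..n} k"
  shows "\<exists>x y. x \<in> ext_pow (Vj n j) k \<and> y \<in> ext_pow (Vj n j) (k - 1) \<and> m = x + wedge (evec j) y"
proof -
  define x where "x = rst (\<lambda>S. j \<notin> S) m"
  have x1: "x \<in> ext_pow (Vj n j) k"
    using m unfolding x_def ext_pow_def rst_def by auto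
  have r: "rst (\<lambda>S. j \<in> S) m \<in> ext_pow {1..n} k" using rst_ext_pow[OF m] .
  have "\<forall>S. rst (\<lambda>S. j \<in> S) m S \<noteq> 0 \<longrightarrow> {j} \<subseteq> S" unfolding rst_def by auto
  from factor_lemma[OF _ _ r this] j obtain y where
    y: "y \<in> ext_pow (Vj n j) (k - 1)" "rst (\<lambda>S. j \<in> S) m = wedge (mono1 {j}) y" by auto
  have "m = x + wedge (evec j) y"
    unfolding evec_mono1 y(2)[symmetric] x_def rst_def by auto
  with x1 y show ?thesis by blast
qed

lemma decomp_unique:
  fixes m :: "'a::field ext"
  assumes j: "j \<in> {1..n}" and m: "m \<in> ext_pow {1..n} k"
  shows "\<exists>!p. (\<lambda>(x, y). x \<in> ext_pow (Vj n j) k \<and> y \<in> ext_pow (Vj n j) (k - 1)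
                                 \<and> m = x + wedge (evec j) y) p"
proof -
  obtain x y where xy: "x \<in> ext_pow (Vj n j) k" "y \<in> ext_pow (Vj n j) (k - 1)" "m = x + wedge (evec j) y"
    using decomp_ex[OF j m] by blast
  show ?thesis
  proof (rule ex1I[of _ "(x, y)"])
    show "(\<lambda>(x, y). x \<in> ext_pow (Vj n j) k \<and> y \<in> ext_pow (Vj n j) (k - 1) \<and> m = x + wedge (evec j) y) (x, y)"
      using xy by simp
    fix p assume "(\<lambda>(x, y). x \<in> ext_pow (Vj n j) k \<and> y \<in> ext_pow (Vj n j) (k - 1) \<and> m = x + wedge (evec j) y) p"
    then obtain x' y' where p: "p = (x', y')" "x' \<in> ext_pow (Vj n j) k" "y' \<in> ext_pow (Vj n j) (k - 1)" "m = x' + wedge (evec j) y'"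
      by (cases p) auto
    show "p = (x, y)" using sol_form[OF p(2-4)] sol_form[OF xy] p(1) by simp
  qed
qed

lemma slow_shift_hom:
  fixes m :: "'a::field ext"
  assumes j: "j \<in> {1..n}" and ij: "i \<noteq> j" and m: "m \<in> ext_pow {1..n} k"
  shows "hom j (slow_shift n k j i m)"
proof -
  define p where "p = (THE (x, y). x \<in> ext_pow (Vj n j) k \<and> y \<in> ext_pow (Vj n j) (k - 1)
                                 \<and> m = x + wedge (evec j) y)"
  have "(\<lambda>(x, y). x \<in> ext_pow (Vj n j) k \<and> y \<in> ext_pow (Vj n j) (k - 1) \<and> m = x + wedge (evec j) y) p"
    unfolding p_def by (rule theI'[OF decomp_unique[OF j m]])
  then obtain x y where p: "p = (x, y)" "x \<in> ext_pow (Vj n j) k" "y \<in> ext_pow (Vj n j) (k - 1)"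
    by (cases p) auto
  have ss: "slow_shift n k j i m = (if x + wedge (evec i) y \<noteq> 0 then x + wedge (evec i) y else wedge (evec j) y)"
    unfolding slow_shift_def p_def[symmetric] p(1) by simp
  show ?thesis
  proof (cases "x + wedge (evec i) y \<noteq> 0")
    case True
    have "j \<notin> S" if "(x + wedge (evec i) y) S \<noteq> 0" for S
    proof
      assume jS: "j \<in> S"
      have "x S = 0" using ext_pow_fin[OF p(2), of S] jS by blast
      moreover have "wedge (evec i) y S = 0"
      proof (cases "finite S \<and> {i} \<subseteq> S")
        case True
        have "j \<in> S - {i}" using jS ij by auto
        then have "y (S - {i}) = 0" using ext_pow_fin[OF p(3), of "S - {i}"] by blast
        then show ?thesis unfolding evec_mono1 wedge_mono1 by simp
      next
        case False then show ?thesis unfolding evec_mono1 using wedge_mono1 by metis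
      qed
      ultimately show False using that by simp
    qed
    then show ?thesis unfolding hom_def ss using True by auto
  next
    case False
    then show ?thesis unfolding hom_def ss using wedge_evec_zero[of j _ y] by auto
  qed
qed

interpretation V: vector_space "fscale :: 'a::field \<Rightarrow> 'a ext \<Rightarrow> 'a ext"
  by (rule vector_space_fscale)

lemma hom_rst: "hom j b \<Longrightarrow> hom j (rst P b)"
  unfolding hom_def rst_def by auto

lemma hom_rst_j: "hom j (rst (\<lambda>S. j \<notin> S) b)" "hom j (rst (\<lambda>S. j \<in> S) b)"
  unfolding hom_def rst_def by auto

lemma rst_split: "b = rst P b + rst (\<lambda>S. \<not> P S) b"
  unfolding rst_def by auto

lemma rst_stable:
  fixes G :: "'a::field ext set"
  assumes v: "v \<in> V.span G" and G: "\<forall>g\<in>G. hom j g"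
  shows "rst (\<lambda>S. j \<notin> S) v \<in> V.span G"
  using v
proof (induction rule: V.span_induct)
  case base
  show ?case unfolding V.subspace_def
  proof (intro conjI ballI allI; simp)
    have "rst (\<lambda>S. j \<notin> S) (0 :: 'a ext) = 0" unfolding rst_def by auto
    then show "rst (\<lambda>S. j \<notin> S) (0 :: 'a ext) \<in> V.span G" using V.span_zero by simp
  next
    fix x y :: "'a ext" assume "rst (\<lambda>S. j \<notin> S) x \<in> V.span G" "rst (\<lambda>S. j \<notin> S) y \<in> V.span G"
    moreover have "rst (\<lambda>S. j \<notin> S) (x + y) = rst (\<lambda>S. j \<notin> S) x + rst (\<lambda>S. j \<notin> S) y"
      unfolding rst_def by auto
    ultimately show "rst (\<lambda>S. j \<notin> S) (x + y) \<in> V.span G" using V.span_add by simp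
  next
    fix c :: 'a and x :: "'a ext" assume "rst (\<lambda>S. j \<notin> S) x \<in> V.span G"
    moreover have "rst (\<lambda>S. j \<notin> S) (fscale c x) = fscale c (rst (\<lambda>S. j \<notin> S) x)"
      unfolding rst_def fscale_def by auto
    ultimately show "rst (\<lambda>S. j \<notin> S) (fscale c x) \<in> V.span G" using V.span_scale by simp
  qed
next
  case (step x)
  then have "hom j x" using G by auto
  then have "rst (\<lambda>S. j \<notin> S) x = x \<or> rst (\<lambda>S. j \<notin> S) x = 0"
    unfolding hom_def rst_def by (auto simp: fun_eq_iff)
  then show ?case using step V.span_base V.span_zero by metis
qed

lemma count3:
  fixes S S' :: "nat set"
  assumes S: "S \<subseteq> {1..n}" "card S = k" "S \<inter> {1,2} \<noteq> {}" "\<not> {1,2} \<subseteq> S"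
    and S': "S' \<subseteq> {1..n}" "card S' = k" "S' \<inter> {1,2} \<noteq> {}" "\<not> {1,2} \<subseteq> S'"
    and same: "\<forall>j\<in>{4..n}. j \<in> S \<longleftrightarrow> j \<in> S'"
    and three: "3 \<in> S"
  shows "3 \<in> S'"
proof -
  have dec: "card X = card (X \<inter> {1,2}) + card (X \<inter> {3}) + card (X \<inter> {4..n})" if "X \<subseteq> {1..n}" for X
  proof -
    have "X = (X \<inter> {1,2}) \<union> (X \<inter> {3}) \<union> (X \<inter> {4..n})" using that by auto
    moreover have "card ((X \<inter> {1,2}) \<union> (X \<inter> {3}) \<union> (X \<inter> {4..n})) =
        card ((X \<inter> {1,2}) \<union> (X \<inter> {3})) + card (X \<inter> {4..n})"
      by (rule card_Un_disjoint) auto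
    moreover have "card ((X \<inter> {1,2}) \<union> (X \<inter> {3})) = card (X \<inter> {1,2}) + card (X \<inter> {3})"
      by (rule card_Un_disjoint) auto
    ultimately show ?thesis by metis
  qed
  have one: "card (X \<inter> {1,2}) = 1" if "X \<inter> {1,2} \<noteq> {}" "\<not> {1,2} \<subseteq> X" for X :: "nat set"
  proof -
    have "X \<inter> {1,2} = {1} \<or> X \<inter> {1,2} = {2}" using that by auto
    then show ?thesis unfolding One_nat_def card_1_singleton_iff by blast
  qed
  have T: "S \<inter> {4..n} = S' \<inter> {4..n}" using same by auto
  have T': "card (S \<inter> {4..n}) = card (S' \<inter> {4..n})" using T by simp
  have "card (S \<inter> {3}) = card (S' \<inter> {3})"
    using dec[OF S(1)] dec[OF S'(1)] one[OF S(3,4)] one[OF S'(3,4)] S(2) S'(2) T' by linarith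
  moreover have "card (S \<inter> {3}) = 1" using three by (simp add: Int_insert_right)
  ultimately have "S' \<inter> {3} \<noteq> {}" by (metis card.empty zero_neq_one)
  then show ?thesis by auto
qed

lemma hom_disj:
  fixes b :: "'a::field ext"
  assumes j: "j \<in> {1..n}" and b: "b \<in> ext_pow {1..n} k" and h: "hom j b"
  shows "b \<in> ext_pow (Vj n j) k \<or> b \<in> {wedge (evec j) y | y. y \<in> ext_pow (Vj n j) (k - 1)}"
  using h unfolding hom_def
proof
  assume "\<forall>S. b S \<noteq> 0 \<longrightarrow> j \<notin> S"
  then have "b \<in> ext_pow (Vj n j) k" using b unfolding ext_pow_def by auto
  then show ?thesis by blast
next
  assume "\<forall>S. b S \<noteq> 0 \<longrightarrow> j \<in> S"
  then have "\<forall>S. b S \<noteq> 0 \<longrightarrow> {j} \<subseteq> S" by auto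
  from factor_lemma[OF _ _ b this] j obtain y where
    "y \<in> ext_pow (Vj n j) (k - 1)" "b = wedge (evec j) y" unfolding evec_mono1 by auto
  then show ?thesis by blast
qed

lemma ext_pow_mono: "A \<subseteq> B \<Longrightarrow> x \<in> ext_pow A k \<Longrightarrow> x \<in> ext_pow B k"
  unfolding ext_pow_def by auto

theorem corollary3p15:
  fixes n k :: nat and L :: "'a::field ext set"
  assumes char: "(2::'a) \<noteq> 0"
    and n2: "2 \<le> n"
    and k2: "2 \<le> k"
    and Lsub: "module.subspace fscale L"
    and LV: "L \<subseteq> ext_pow {1..n} k"
    and contains: "{wedge (wedge (evec 1) (evec 2)) y | y. y \<in> ext_pow {1..n} (k - 2)} \<subseteq> L"
    and kills: "\<forall>x\<in>L. wedge (wedge (evec 1) (evec 2)) x = 0"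
    and stable: "\<forall>i\<in>{1..n}. \<forall>j\<in>{1..n}. 3 \<le> i \<and> i < j \<longrightarrow> slow_shift_space n k j i L = L"
  shows "\<exists>B. B \<subseteq> L \<and> module.independent fscale B \<and> module.span fscale B = L \<and>
           (\<forall>b\<in>B. \<forall>j\<in>{3..n}.
              b \<in> ext_pow (Vj n j) k \<or>
              b \<in> {wedge (evec j) y | y. y \<in> ext_pow (Vj n j) (k - 1)})"
proof -
  have LV': "\<And>x. x \<in> L \<Longrightarrow> x \<in> ext_pow {1..n} k" using LV by auto
  have sub: "V.subspace L" using Lsub .
  have supp12: "S \<inter> {1,2} \<noteq> {}" if x: "x \<in> L" and nz: "x S \<noteq> 0" for x S
  proof
    assume d: "S \<inter> {1,2} = {}"
    have "S \<subseteq> {1..n}" using LV'[OF x] nz unfolding ext_pow_def by auto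
    then have fin: "finite (S \<union> {1,2})" using finite_subset by auto
    have "(S \<union> {1,2}) - {1,2} = S" using d by auto
    then have "wedge (mono1 {1,2}) x (S \<union> {1,2}) = ext_sign {1,2} S * x S"
      using fin unfolding wedge_mono1 by auto
    moreover have "wedge (mono1 {1,2}) x = 0" using kills x e12 by metis
    then have "wedge (mono1 {1,2}) x (S \<union> {1,2}) = 0" by simp
    ultimately have "ext_sign {1::nat,2} S * x S = 0" by simp
    then show False using nz ext_sign_nz[of "{1::nat,2}" S] mult_eq_0_iff by metis
  qed
  have in12: "r \<in> L" if r: "r \<in> ext_pow {1..n} k" and sr: "\<forall>S. r S \<noteq> 0 \<longrightarrow> {1,2} \<subseteq> S" for r
  proof -
    have "{1,2} \<subseteq> {1..n}" using n2 by auto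
    from factor_lemma[OF this _ r sr] obtain y where
      y: "y \<in> ext_pow ({1..n} - {1,2}) (k - card {1::nat,2})" "r = wedge (mono1 {1,2}) y" by auto
    have c2: "card {1::nat,2} = 2" by simp
    have "y \<in> ext_pow {1..n} (k - 2)" using ext_pow_mono[OF _ y(1)] unfolding c2 by blast
    then have "wedge (wedge (evec 1) (evec 2)) y \<in> L" using contains by blast
    then show ?thesis using y(2) e12 by metis
  qed
  have stab: "rst (\<lambda>S. j \<notin> S) m \<in> L" if j: "j \<in> {4..n}" and m: "m \<in> L" for j m
  proof -
    have "slow_shift_space n k j 3 L = L" using stable j by auto
    then have eq: "V.span (slow_shift n k j 3 ` (L - {0})) = L" unfolding slow_shift_space_def .
    have "\<forall>g\<in>slow_shift n k j 3 ` (L - {0}). hom j g"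
      using slow_shift_hom[of j n 3 _ k] LV' j by auto
    from rst_stable[OF _ this, of m] m eq show ?thesis by auto
  qed
  have stab2: "rst (\<lambda>S. j \<in> S) m \<in> L" if j: "j \<in> {4..n}" and m: "m \<in> L" for j m
  proof -
    have "rst (\<lambda>S. j \<in> S) m = m - rst (\<lambda>S. j \<notin> S) m" unfolding rst_def by auto
    then show ?thesis using V.subspace_diff[OF sub m stab[OF j m]] by simp
  qed
  define Hs where "Hs J = {b \<in> L. \<forall>j\<in>J. hom j b}" for J
  have ind: "finite J \<Longrightarrow> J \<subseteq> {4..n} \<Longrightarrow> L \<subseteq> V.span (Hs J)" for J
  proof (induction J rule: finite_induct)
    case empty
    then show ?case unfolding Hs_def using V.span_superset by auto
  next
    case (insert j J)
    have "Hs J \<subseteq> V.span (Hs (insert j J))"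
    proof
      fix b assume b: "b \<in> Hs J"
      have jj: "j \<in> {4..n}" using insert by auto
      have "rst (\<lambda>S. j \<notin> S) b \<in> Hs (insert j J)" "rst (\<lambda>S. j \<in> S) b \<in> Hs (insert j J)"
        using b stab[OF jj] stab2[OF jj] unfolding Hs_def by (auto simp: hom_rst hom_rst_j)
      moreover have "b = rst (\<lambda>S. j \<notin> S) b + rst (\<lambda>S. j \<in> S) b" unfolding rst_def by auto
      ultimately show "b \<in> V.span (Hs (insert j J))" using V.span_add V.span_base by metis
    qed
    then have "V.span (Hs J) \<subseteq> V.span (Hs (insert j J))" using V.span_minimal V.subspace_span by blast
    then show ?case using insert by auto
  qed
  have L4: "L \<subseteq> V.span (Hs {4..n})" using ind by auto
  define H where "H = Hs {3..n}"
  have "Hs {4..n} \<subseteq> V.span H"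
  proof
    fix b assume b: "b \<in> Hs {4..n}"
    then have bL: "b \<in> L" and bh: "\<forall>j\<in>{4..n}. hom j b" unfolding Hs_def by auto
    define r1 where "r1 = rst (\<lambda>S. {1,2} \<subseteq> S \<and> 3 \<in> S) b"
    define r2 where "r2 = rst (\<lambda>S. {1,2} \<subseteq> S \<and> 3 \<notin> S) b"
    define r3 where "r3 = rst (\<lambda>S. \<not> {1,2} \<subseteq> S) b"
    have bsum: "b = r1 + r2 + r3" unfolding r1_def r2_def r3_def rst_def by auto
    have r1L: "r1 \<in> L" unfolding r1_def
      by (rule in12[OF rst_ext_pow[OF LV'[OF bL]]]) (auto simp: rst_def)
    have r2L: "r2 \<in> L" unfolding r2_def
      by (rule in12[OF rst_ext_pow[OF LV'[OF bL]]]) (auto simp: rst_def)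
    have "r3 = b - r1 - r2" using bsum by simp
    then have r3L: "r3 \<in> L" using V.subspace_diff[OF sub V.subspace_diff[OF sub bL r1L] r2L] by simp
    have h4: "\<forall>j\<in>{4..n}. hom j r1 \<and> hom j r2 \<and> hom j r3"
      using bh hom_rst unfolding r1_def r2_def r3_def by blast
    have h31: "hom 3 r1" "hom 3 r2" unfolding r1_def r2_def hom_def rst_def by auto
    have sup: "S \<subseteq> {1..n} \<and> card S = k \<and> S \<inter> {1,2} \<noteq> {} \<and> \<not> {1,2} \<subseteq> S" if "r3 S \<noteq> 0" for S
    proof -
      have "b S \<noteq> 0" "\<not> {1,2} \<subseteq> S" using that unfolding r3_def rst_def by (auto split: if_splits)
      then show ?thesis using LV'[OF bL] supp12[OF bL] unfolding ext_pow_def by auto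
    qed
    have same: "\<forall>j\<in>{4..n}. j \<in> S \<longleftrightarrow> j \<in> S'" if "r3 S \<noteq> 0" "r3 S' \<noteq> 0" for S S'
    proof -
      have "b S \<noteq> 0" "b S' \<noteq> 0" using that unfolding r3_def rst_def by (auto split: if_splits)
      then show ?thesis using bh unfolding hom_def by blast
    qed
    have h33: "hom 3 r3"
    proof (cases "\<exists>S. r3 S \<noteq> 0 \<and> 3 \<in> S")
      case True
      then obtain S where S: "r3 S \<noteq> 0" "3 \<in> S" by blast
      have "3 \<in> S'" if "r3 S' \<noteq> 0" for S'
        using count3[of S n k S'] sup[OF S(1)] sup[OF that] same[OF S(1) that] S(2) by blast
      then show ?thesis unfolding hom_def by blast
    next
      case False
      then show ?thesis unfolding hom_def by blast
    qed
    have hall: "\<forall>j\<in>{3..n}. hom j r1 \<and> hom j r2 \<and> hom j r3"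
    proof
      fix j assume "j \<in> {3..n}"
      then have "j = 3 \<or> j \<in> {4..n}" by auto
      then show "hom j r1 \<and> hom j r2 \<and> hom j r3" using h4 h31 h33 by auto
    qed
    have "r1 \<in> H" "r2 \<in> H" "r3 \<in> H" unfolding H_def Hs_def using r1L r2L r3L hall by auto
    then show "b \<in> V.span H" using bsum V.span_add V.span_base by metis
  qed
  then have LH: "L \<subseteq> V.span H" using L4 V.span_minimal V.subspace_span by blast
  obtain B where B: "B \<subseteq> H" "V.independent B" "H \<subseteq> V.span B"
    using V.maximal_independent_subset[of H] by blast
  have HL: "H \<subseteq> L" unfolding H_def Hs_def by auto
  have "V.span B \<subseteq> L" using B(1) HL V.span_minimal sub by blast
  moreover have "V.span H \<subseteq> V.span B" using B(3) V.span_minimal V.subspace_span by blast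
  ultimately have spanB: "V.span B = L" using LH by blast
  have "\<forall>b\<in>B. \<forall>j\<in>{3..n}. b \<in> ext_pow (Vj n j) k \<or>
              b \<in> {wedge (evec j) y | y. y \<in> ext_pow (Vj n j) (k - 1)}"
  proof (intro ballI)
    fix b j assume "b \<in> B" "j \<in> {3..n}"
    then have "b \<in> L" "hom j b" "j \<in> {1..n}" using B(1) unfolding H_def Hs_def by auto
    then show "b \<in> ext_pow (Vj n j) k \<or> b \<in> {wedge (evec j) y | y. y \<in> ext_pow (Vj n j) (k - 1)}"
      using hom_disj LV' by blast
  qed
  then show ?thesis using B(1) B(2) HL spanB by blast
qed

end
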